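(* Let $A, E \in \mathbb{R}^{d_1\times d_2}$, let $B = A+E$, and let $d=\max\{d_1,d_2\}$. There exists a numerical constant $C_0>0$ such that for any $1\le r<d$: if $\sigma_r(A)>\sigma_{r+1}(A)$ and $\|E\|\le (\sigma_r(A)-\sigma_{r+1}(A))/2$, then $$\|B_r-A_r\|_{\mathrm F}\le C_0\sqrt{r}\,\|E\|\left(1+\frac{\sqrt{\sigma_{r+1}(A)\sigma_1(A)}}{\sigma_r(A)-\sigma_{r+1}(A)}\right).$$
   Context: For a matrix $M\in\mathbb{R}^{d_1\times d_2}$, $\sigma_1(M)\ge\sigma_2(M)\ge\cdots$ denote its singular values, and $M_r$ denotes its best rank-$r$ approximation (in Frobenius norm), i.e. the truncation of its singular value decomposition to the top $r$ singular values and vectors. $\|\cdot\|$ is the spectral norm and $\|\cdot\|_{\mathrm F}$ the Frobenius norm. *)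

theory Defs
  imports "Jordan_Normal_Form.Matrix"
begin

definition orth_mat :: "nat \<Rightarrow> real mat \<Rightarrow> bool" where
  "orth_mat n U \<longleftrightarrow> U \<in> carrier_mat n n \<and> transpose_mat U * U = 1\<^sub>m n"

definition is_svd :: "nat \<Rightarrow> nat \<Rightarrow> real mat \<Rightarrow> real mat \<Rightarrow> real mat \<Rightarrow> real mat \<Rightarrow> bool" where
  "is_svd d1 d2 M U S V \<longleftrightarrow>
     M \<in> carrier_mat d1 d2 \<and> orth_mat d1 U \<and> orth_mat d2 V \<and>
     S \<in> carrier_mat d1 d2 \<and> diagonal_mat S \<and>
     (\<forall>i < min d1 d2. S $$ (i,i) \<ge> 0) \<and>
     (\<forall>i j. i \<le> j \<longrightarrow> j < min d1 d2 \<longrightarrow> S $$ (j,j) \<le> S $$ (i,i)) \<and>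
     M = U * S * transpose_mat V"

(* singular values, 1-indexed: sigma_i(M) for 1 <= i <= min d1 d2 is the i-th diagonal
   entry of S in an SVD; sigma_i(M) = 0 for i > min d1 d2 (singular values are unique,
   so the choice of SVD does not matter) *)
definition sing_val :: "real mat \<Rightarrow> nat \<Rightarrow> real" where
  "sing_val M i = (let S = (SOME S. \<exists>U V. is_svd (dim_row M) (dim_col M) M U S V) in
     if 1 \<le> i \<and> i \<le> min (dim_row M) (dim_col M) then S $$ (i - 1, i - 1) else 0)"

definition trunc_diag :: "nat \<Rightarrow> real mat \<Rightarrow> real mat" where
  "trunc_diag r S = mat (dim_row S) (dim_col S) (\<lambda>(i,j). if i < r then S $$ (i,j) else 0)"

(* X is a best rank-r approximation M_r of M, i.e. a truncation of an SVD of M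
   to its top r singular values/vectors *)
definition is_rank_trunc :: "real mat \<Rightarrow> nat \<Rightarrow> real mat \<Rightarrow> bool" where
  "is_rank_trunc M r X \<longleftrightarrow> (\<exists>U S V. is_svd (dim_row M) (dim_col M) M U S V \<and>
      X = U * trunc_diag r S * transpose_mat V)"

definition vnorm :: "real vec \<Rightarrow> real" where
  "vnorm x = sqrt (\<Sum>i<dim_vec x. (x $ i)^2)"

definition spec_norm :: "real mat \<Rightarrow> real" where
  "spec_norm M = Sup ({vnorm (M *\<^sub>v x) | x. x \<in> carrier_vec (dim_col M) \<and> vnorm x \<le> 1})"

definition frob_norm :: "real mat \<Rightarrow> real" where
  "frob_norm M = sqrt (\<Sum>i<dim_row M. \<Sum>j<dim_col M. (M $$ (i,j))^2)"

end

theory Submission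
  imports Defs "Jordan_Normal_Form.Determinant" "Jordan_Normal_Form.VS_Connect" "Jordan_Normal_Form.DL_Rank"
begin

definition ucol :: "real mat \<Rightarrow> nat \<Rightarrow> real vec" where
  "ucol U j = (if j < dim_col U then col U j else 0\<^sub>v (dim_row U))"

definition sv :: "real mat \<Rightarrow> nat \<Rightarrow> real" where
  "sv S j = (if j < min (dim_row S) (dim_col S) then S $$ (j,j) else 0)"

lemma sq_sum_eq: "x \<bullet> x = (\<Sum>i<dim_vec x. ((x::real vec) $ i)^2)"
  unfolding scalar_prod_def by (auto simp: power2_eq_square intro!: sum.cong)

lemma vnorm_sq: "(vnorm x)^2 = x \<bullet> x"
  unfolding vnorm_def sq_sum_eq by (simp add: sum_nonneg)

lemma self_sp_nonneg: "x \<bullet> (x::real vec) \<ge> 0"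
  unfolding sq_sum_eq by (intro sum_nonneg) simp

lemma vnorm_nonneg: "vnorm x \<ge> 0" unfolding vnorm_def by (intro real_sqrt_ge_zero sum_nonneg) simp

lemma vnorm_eq: "vnorm x = sqrt (x \<bullet> x)"
  unfolding vnorm_def sq_sum_eq ..

lemma orth_UUt: assumes "orth_mat n U" shows "U * transpose_mat U = 1\<^sub>m n"
  using assms unfolding orth_mat_def
  by (metis mat_mult_left_right_inverse transpose_carrier_mat)

lemma orth_carrier: "orth_mat n U \<Longrightarrow> U \<in> carrier_mat n n"
  unfolding orth_mat_def by simp

lemma parseval:
  assumes U: "orth_mat n U" and x: "x \<in> carrier_vec n"
  shows "(\<Sum>i<n. (col U i \<bullet> x)^2) = x \<bullet> x"
proof -
  have Uc: "U \<in> carrier_mat n n" using orth_carrier[OF U] .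
  define y where "y = transpose_mat U *\<^sub>v x"
  have yc: "y \<in> carrier_vec n" using Uc x unfolding y_def by auto
  have yi: "y $ i = col U i \<bullet> x" if "i < n" for i
    using that Uc x unfolding y_def by (simp add: row_transpose)
  have "y \<bullet> y = x \<bullet> (U *\<^sub>v y)"
    using transpose_vec_mult_scalar[OF Uc yc x] unfolding y_def by simp
  also have "U *\<^sub>v y = (U * transpose_mat U) *\<^sub>v x"
    unfolding y_def using Uc x by (simp add: assoc_mult_mat_vec)
  also have "\<dots> = x" using orth_UUt[OF U] x by simp
  finally have "y \<bullet> y = x \<bullet> x" .
  moreover have "y \<bullet> y = (\<Sum>i<n. (col U i \<bullet> x)^2)"
    unfolding sq_sum_eq using yc yi by auto
  ultimately show ?thesis by simp
qed

lemma ucol_carrier: "U \<in> carrier_mat n n \<Longrightarrow> ucol U i \<in> carrier_vec n"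
  unfolding ucol_def by auto

lemma parseval_pad:
  assumes U: "orth_mat n U" and x: "x \<in> carrier_vec n" and D: "n \<le> D"
  shows "(\<Sum>i<D. (ucol U i \<bullet> x)^2) = x \<bullet> x"
proof -
  have Uc: "U \<in> carrier_mat n n" using orth_carrier[OF U] .
  have "(\<Sum>i<D. (ucol U i \<bullet> x)^2) = (\<Sum>i<n. (ucol U i \<bullet> x)^2) + (\<Sum>i\<in>{n..<D}. (ucol U i \<bullet> x)^2)"
    using D by (metis lessThan_atLeast0 sum.atLeastLessThan_concat zero_le)
  also have "(\<Sum>i\<in>{n..<D}. (ucol U i \<bullet> x)^2) = 0"
    using Uc x by (auto simp: ucol_def intro!: sum.neutral)
  also have "(\<Sum>i<n. (ucol U i \<bullet> x)^2) = (\<Sum>i<n. (col U i \<bullet> x)^2)"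
    using Uc by (auto simp: ucol_def)
  finally show ?thesis using parseval[OF U x] by simp
qed

lemma mat_unit_vec: fixes D :: "real mat" assumes "D \<in> carrier_mat n m" "j < m"
  shows "D *\<^sub>v unit_vec m j = col D j"
proof (intro eq_vecI)
  fix i assume "i < dim_vec (col D j)"
  then have i: "i < n" using assms by simp
  have "(D *\<^sub>v unit_vec m j) $ i = row D i \<bullet> unit_vec m j" using i assms by simp
  also have "\<dots> = row D i $ j" using assms(2) by (rule scalar_prod_right_unit)
  also have "\<dots> = D $$ (i,j)" using i assms by simp
  finally show "(D *\<^sub>v unit_vec m j) $ i = col D j $ i" using i assms by simp
qed (use assms in simp)

lemma zero_mult_vec: "(A::real mat) \<in> carrier_mat n m \<Longrightarrow> A *\<^sub>v 0\<^sub>v m = 0\<^sub>v n"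
  by (intro eq_vecI) auto

lemma diag_action:
  assumes U: "orth_mat d1 U" and V: "orth_mat d2 V" and Dc: "D \<in> carrier_mat d1 d2"
    and dg: "diagonal_mat D" and M: "M = U * D * transpose_mat V"
  shows "M *\<^sub>v ucol V j = sv D j \<cdot>\<^sub>v ucol U j"
proof -
  have Uc: "U \<in> carrier_mat d1 d1" and Vc: "V \<in> carrier_mat d2 d2"
    using U V by (auto simp: orth_mat_def)
  show ?thesis
  proof (cases "j < d2")
    case False
    then have "ucol V j = 0\<^sub>v d2" using Vc by (simp add: ucol_def)
    moreover have "sv D j = 0" using False Dc by (simp add: sv_def)
    moreover have "M \<in> carrier_mat d1 d2" using M Uc Vc Dc by auto
    moreover have "ucol U j \<in> carrier_vec d1" using Uc by (rule ucol_carrier)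
    ultimately show ?thesis using zero_mult_vec by (auto intro!: eq_vecI)
  next
    case True
    have cj: "col V j \<in> carrier_vec d2" using Vc by auto
    have "M *\<^sub>v col V j = U *\<^sub>v (D *\<^sub>v (transpose_mat V *\<^sub>v col V j))"
    proof -
      have "M *\<^sub>v col V j = (U * D) *\<^sub>v (transpose_mat V *\<^sub>v col V j)"
        unfolding M using Uc Vc Dc cj by (intro assoc_mult_mat_vec[of _ d1 d2 _ d2]) auto
      also have "\<dots> = U *\<^sub>v (D *\<^sub>v (transpose_mat V *\<^sub>v col V j))"
        using Uc Vc Dc cj by (intro assoc_mult_mat_vec[of _ d1 d1 _ d2]) auto
      finally show ?thesis .
    qed
    also have "transpose_mat V *\<^sub>v col V j = unit_vec d2 j"
    proof -
      have "transpose_mat V *\<^sub>v col V j = col (transpose_mat V * V) j"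
        using col_mult2[of "transpose_mat V" d2 d2 V d2 j] Vc True by auto
      also have "\<dots> = unit_vec d2 j" using V True by (simp add: orth_mat_def)
      finally show ?thesis .
    qed
    also have "D *\<^sub>v unit_vec d2 j = col D j" using mat_unit_vec[OF Dc True] .
    also have "col D j = sv D j \<cdot>\<^sub>v unit_vec d1 j"
    proof (intro eq_vecI)
      show "dim_vec (col D j) = dim_vec (sv D j \<cdot>\<^sub>v unit_vec d1 j)" using Dc by simp
    next
      fix i assume "i < dim_vec (sv D j \<cdot>\<^sub>v unit_vec d1 j)"
      then have i: "i < d1" by simp
      show "col D j $ i = (sv D j \<cdot>\<^sub>v unit_vec d1 j) $ i"
        using dg Dc i True unfolding diagonal_mat_def sv_def by (auto simp: unit_vec_def)
    qed
    also have "U *\<^sub>v (sv D j \<cdot>\<^sub>v unit_vec d1 j) = sv D j \<cdot>\<^sub>v (U *\<^sub>v unit_vec d1 j)"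
      using Uc by (simp add: mult_mat_vec)
    also have "sv D j \<cdot>\<^sub>v (U *\<^sub>v unit_vec d1 j) = sv D j \<cdot>\<^sub>v ucol U j"
    proof (cases "j < d1")
      case True
      then show ?thesis using Uc mat_unit_vec[OF Uc True] by (simp add: ucol_def)
    next
      case False
      then have "sv D j = 0" using Dc by (simp add: sv_def)
      then show ?thesis using Uc by (auto intro!: eq_vecI simp: ucol_def)
    qed
    finally show ?thesis using True Vc by (simp add: ucol_def)
  qed
qed

lemma cs_sum:
  fixes f g :: "nat \<Rightarrow> real"
  shows "(\<Sum>i\<in>A. f i * g i)^2 \<le> (\<Sum>i\<in>A. (f i)^2) * (\<Sum>i\<in>A. (g i)^2)"
proof -
  define a where "a = (\<Sum>i\<in>A. (g i)^2)"
  define b where "b = (\<Sum>i\<in>A. f i * g i)"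
  define c where "c = (\<Sum>i\<in>A. (f i)^2)"
  have a0: "a \<ge> 0" unfolding a_def by (intro sum_nonneg) simp
  have "0 \<le> (\<Sum>i\<in>A. (a * f i - b * g i)^2)" by (intro sum_nonneg) simp
  also have "\<dots> = (\<Sum>i\<in>A. a^2 * (f i)^2 - 2 * a * b * (f i * g i) + b^2 * (g i)^2)"
    by (intro sum.cong) (auto simp: power2_eq_square algebra_simps)
  also have "\<dots> = a^2 * c - 2 * a * b * b + b^2 * a"
    unfolding a_def b_def c_def by (simp add: sum.distrib sum_subtractf sum_distrib_left)
  also have "\<dots> = a * (a * c - b^2)" by (simp add: power2_eq_square algebra_simps)
  finally have h: "0 \<le> a * (a * c - b^2)" .
  show ?thesis
  proof (cases "a = 0")
    case True
    then have "\<forall>i\<in>A. g i = 0 \<or> infinite A" unfolding a_def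
      by (metis (no_types, lifting) sum_nonneg_eq_0_iff power_eq_0_iff zero_le_power2)
    then have "b = 0" unfolding b_def by (cases "finite A") auto
    then show ?thesis using True unfolding a_def b_def c_def by simp
  next
    case False
    then have "a > 0" using a0 by simp
    then have "a * c - b^2 \<ge> 0" using h by (simp add: zero_le_mult_iff)
    then show ?thesis unfolding a_def b_def c_def by (simp add: mult.commute)
  qed
qed

lemma cs_vec:
  fixes x y :: "real vec"
  assumes "dim_vec x = dim_vec y"
  shows "\<bar>x \<bullet> y\<bar> \<le> vnorm x * vnorm y"
proof -
  have "(x \<bullet> y)^2 \<le> (x \<bullet> x) * (y \<bullet> y)"
    using cs_sum[of "\<lambda>i. x $ i" "\<lambda>i. y $ i" "{0..<dim_vec y}"] assms
    unfolding scalar_prod_def by (simp add: power2_eq_square)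
  also have "\<dots> = (vnorm x * vnorm y)^2" by (simp add: power_mult_distrib vnorm_sq)
  finally show ?thesis
    using abs_le_square_iff[of "x \<bullet> y" "vnorm x * vnorm y"] vnorm_nonneg[of x] vnorm_nonneg[of y]
    by simp
qed

lemma vnorm_smult: "vnorm (c \<cdot>\<^sub>v v) = \<bar>c\<bar> * vnorm v"
proof -
  have "(c \<cdot>\<^sub>v v) \<bullet> (c \<cdot>\<^sub>v v) = c^2 * (v \<bullet> v)"
    by (simp add: power2_eq_square scalar_prod_smult_left scalar_prod_smult_right)
  then show ?thesis unfolding vnorm_eq by (simp add: real_sqrt_mult)
qed

lemma vnorm_zero_iff: assumes "v \<in> carrier_vec n" shows "vnorm v = 0 \<longleftrightarrow> v = 0\<^sub>v n"
proof
  assume "vnorm v = 0"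
  then have "(\<Sum>i<dim_vec v. (v $ i)^2) = 0" unfolding vnorm_def by simp
  then have "\<forall>i\<in>{..<dim_vec v}. (v $ i)^2 = 0"
    by (subst sum_nonneg_eq_0_iff[symmetric]) auto
  then show "v = 0\<^sub>v n" using assms by (auto intro!: eq_vecI)
next
  assume "v = 0\<^sub>v n" then show "vnorm v = 0" unfolding vnorm_def by simp
qed

lemma entry_le_vnorm: assumes "j < dim_vec x" shows "\<bar>x $ j\<bar> \<le> vnorm x"
proof -
  have "(x $ j)^2 \<le> (\<Sum>i<dim_vec x. (x $ i)^2)"
    using assms by (intro member_le_sum) auto
  then show ?thesis unfolding vnorm_def by (simp add: real_le_rsqrt)
qed

definition spec_set :: "real mat \<Rightarrow> real set" where
  "spec_set M = {vnorm (M *\<^sub>v x) | x. x \<in> carrier_vec (dim_col M) \<and> vnorm x \<le> 1}"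

lemma spec_bdd: "bdd_above (spec_set E)"
proof -
  define K where "K = sqrt (\<Sum>i<dim_row E. (\<Sum>j<dim_col E. \<bar>E $$ (i,j)\<bar>)^2)"
  have "vnorm (E *\<^sub>v x) \<le> K" if x: "x \<in> carrier_vec (dim_col E)" "vnorm x \<le> 1" for x
  proof -
    have "((E *\<^sub>v x) $ i)^2 \<le> (\<Sum>j<dim_col E. \<bar>E $$ (i,j)\<bar>)^2" if i: "i < dim_row E" for i
    proof -
      have "(E *\<^sub>v x) $ i = (\<Sum>j<dim_col E. E $$ (i,j) * x $ j)"
        using i x by (auto simp: scalar_prod_def lessThan_atLeast0 intro!: sum.cong)
      then have "\<bar>(E *\<^sub>v x) $ i\<bar> = \<bar>\<Sum>j<dim_col E. E $$ (i,j) * x $ j\<bar>" by simp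
      also have "\<dots> \<le> (\<Sum>j<dim_col E. \<bar>E $$ (i,j) * x $ j\<bar>)" by (rule sum_abs)
      also have "\<dots> \<le> (\<Sum>j<dim_col E. \<bar>E $$ (i,j)\<bar>)"
      proof (intro sum_mono)
        fix j assume "j \<in> {..<dim_col E}"
        then have "\<bar>x $ j\<bar> \<le> 1" using entry_le_vnorm[of j x] x by auto
        then show "\<bar>E $$ (i,j) * x $ j\<bar> \<le> \<bar>E $$ (i,j)\<bar>"
          by (simp add: abs_mult mult_left_le)
      qed
      finally have "\<bar>(E *\<^sub>v x) $ i\<bar>^2 \<le> (\<Sum>j<dim_col E. \<bar>E $$ (i,j)\<bar>)^2"
        by (intro power_mono) auto
      then show ?thesis by simp
    qed
    then have "(\<Sum>i<dim_row E. ((E *\<^sub>v x) $ i)^2) \<le> (\<Sum>i<dim_row E. (\<Sum>j<dim_col E. \<bar>E $$ (i,j)\<bar>)^2)"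
      by (intro sum_mono) auto
    then show ?thesis unfolding K_def vnorm_def by simp
  qed
  then show ?thesis unfolding spec_set_def bdd_above_def by blast
qed

lemma spec_norm_alt: "spec_norm E = Sup (spec_set E)"
  unfolding spec_norm_def spec_set_def ..

lemma spec_nonneg: "spec_norm E \<ge> 0"
proof -
  have "vnorm (E *\<^sub>v 0\<^sub>v (dim_col E)) \<in> spec_set E"
    unfolding spec_set_def
    by (rule CollectI, rule exI[of _ "0\<^sub>v (dim_col E)"]) (simp add: vnorm_def)
  moreover have "vnorm (E *\<^sub>v 0\<^sub>v (dim_col E)) = 0"
    by (simp add: vnorm_def)
  ultimately show ?thesis unfolding spec_norm_alt using spec_bdd
    by (metis cSup_upper)
qed

lemma spec_bound:
  assumes x: "x \<in> carrier_vec (dim_col E)"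
  shows "vnorm (E *\<^sub>v x) \<le> spec_norm E * vnorm x"
proof (cases "vnorm x = 0")
  case True
  then have "x = 0\<^sub>v (dim_col E)" using vnorm_zero_iff[OF x] by simp
  then have "vnorm (E *\<^sub>v x) = 0" by (simp add: vnorm_def)
  then show ?thesis using True by simp
next
  case False
  then have p: "vnorm x > 0" using vnorm_nonneg[of x] by simp
  define z where "z = (1 / vnorm x) \<cdot>\<^sub>v x"
  have zc: "z \<in> carrier_vec (dim_col E)" using x unfolding z_def by simp
  have "vnorm z = 1" unfolding z_def vnorm_smult using p by simp
  then have "vnorm (E *\<^sub>v z) \<in> spec_set E" using zc unfolding spec_set_def by force
  then have "vnorm (E *\<^sub>v z) \<le> spec_norm E" unfolding spec_norm_alt using spec_bdd
    by (metis cSup_upper)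
  moreover have "E *\<^sub>v z = (1 / vnorm x) \<cdot>\<^sub>v (E *\<^sub>v x)"
    unfolding z_def using x by (intro mult_mat_vec) auto
  ultimately have "vnorm (E *\<^sub>v x) / vnorm x \<le> spec_norm E"
    using p by (simp add: vnorm_smult)
  then show ?thesis using p by (simp add: divide_le_eq mult.commute)
qed

lemma spec_bound_T:
  assumes y: "y \<in> carrier_vec (dim_row E)"
  shows "vnorm (transpose_mat E *\<^sub>v y) \<le> spec_norm E * vnorm y"
proof -
  define z where "z = transpose_mat E *\<^sub>v y"
  have zc: "z \<in> carrier_vec (dim_col E)" unfolding z_def by (intro carrier_vecI) simp
  have Ec: "E \<in> carrier_mat (dim_row E) (dim_col E)" by simp
  have "(vnorm z)^2 = z \<bullet> z" by (rule vnorm_sq)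
  also have "z \<bullet> z = y \<bullet> (E *\<^sub>v z)"
    unfolding z_def[symmetric] using transpose_vec_mult_scalar[OF Ec zc y] z_def by simp
  also have "\<dots> \<le> \<bar>y \<bullet> (E *\<^sub>v z)\<bar>" by (rule abs_ge_self)
  also have "\<dots> \<le> vnorm y * vnorm (E *\<^sub>v z)"
    by (rule cs_vec) (use carrier_vecD[OF y] in simp)
  also have "\<dots> \<le> vnorm y * (spec_norm E * vnorm z)"
    by (intro mult_left_mono spec_bound zc vnorm_nonneg)
  finally have h: "vnorm z * vnorm z \<le> vnorm z * (spec_norm E * vnorm y)"
    by (simp add: power2_eq_square mult.commute mult.left_commute)
  have "vnorm z \<le> spec_norm E * vnorm y"
  proof (cases "vnorm z = 0")
    case True
    have "0 \<le> spec_norm E * vnorm y" by (intro mult_nonneg_nonneg spec_nonneg vnorm_nonneg)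
    then show ?thesis using True by simp
  next
    case False
    then have "vnorm z > 0" using vnorm_nonneg[of z] by linarith
    then show ?thesis using h by (simp add: mult_le_cancel_left)
  qed
  then show ?thesis unfolding z_def .
qed

lemma sv_transpose: "sv (transpose_mat S) j = sv S j"
  unfolding sv_def by (auto simp: min.commute)

lemma diag_transpose: "diagonal_mat D \<Longrightarrow> diagonal_mat (transpose_mat D)"
  unfolding diagonal_mat_def by auto

lemma transpose_triple:
  assumes "U \<in> carrier_mat d1 d1" "D \<in> carrier_mat d1 d2" "V \<in> carrier_mat d2 d2"
  shows "transpose_mat (U * D * transpose_mat V) = V * transpose_mat D * transpose_mat (U::real mat)"
proof -
  have "transpose_mat (U * D * transpose_mat V) = transpose_mat (transpose_mat V) * transpose_mat (U * D)"
    using assms by (intro transpose_mult[of _ d1 d2]) auto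
  also have "transpose_mat (U * D) = transpose_mat D * transpose_mat U"
    using assms by (intro transpose_mult[of _ d1 d1]) auto
  finally show ?thesis using assms
    by (simp add: assoc_mult_mat[of V d2 d2 "transpose_mat D" d1 "transpose_mat U" d1])
qed

lemma diag_action_T:
  assumes U: "orth_mat d1 U" and V: "orth_mat d2 V" and Dc: "D \<in> carrier_mat d1 d2"
    and dg: "diagonal_mat D" and M: "M = U * D * transpose_mat V"
  shows "transpose_mat M *\<^sub>v ucol U j = sv D j \<cdot>\<^sub>v ucol V j"
proof -
  have "transpose_mat M = V * transpose_mat D * transpose_mat U"
    unfolding M using U V Dc by (intro transpose_triple) (auto simp: orth_mat_def)
  from diag_action[OF V U _ diag_transpose[OF dg] this] Dc show ?thesis
    by (simp add: sv_transpose)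
qed

lemma svd_right: "is_svd d1 d2 M U S V \<Longrightarrow> M *\<^sub>v ucol V j = sv S j \<cdot>\<^sub>v ucol U j"
  unfolding is_svd_def by (intro diag_action[of d1 U d2 V S]) auto

lemma svd_left: "is_svd d1 d2 M U S V \<Longrightarrow> transpose_mat M *\<^sub>v ucol U j = sv S j \<cdot>\<^sub>v ucol V j"
  unfolding is_svd_def by (intro diag_action_T[of d1 U d2 V S]) auto

lemma trunc_diag_carrier: "S \<in> carrier_mat d1 d2 \<Longrightarrow> trunc_diag r S \<in> carrier_mat d1 d2"
  unfolding trunc_diag_def by auto

lemma trunc_diag_diag: "diagonal_mat S \<Longrightarrow> diagonal_mat (trunc_diag r S)"
  unfolding trunc_diag_def diagonal_mat_def by auto

lemma sv_trunc: "sv (trunc_diag r S) j = (if j < r then sv S j else 0)"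
  unfolding sv_def trunc_diag_def by auto

lemma trunc_right:
  assumes "is_svd d1 d2 M U S V" "X = U * trunc_diag r S * transpose_mat V"
  shows "X *\<^sub>v ucol V j = (if j < r then sv S j else 0) \<cdot>\<^sub>v ucol U j"
  using assms unfolding is_svd_def
  by (subst sv_trunc[symmetric], intro diag_action[of d1 U d2 V]) (auto intro: trunc_diag_carrier trunc_diag_diag)

lemma trunc_left:
  assumes "is_svd d1 d2 M U S V" "X = U * trunc_diag r S * transpose_mat V"
  shows "transpose_mat X *\<^sub>v ucol U j = (if j < r then sv S j else 0) \<cdot>\<^sub>v ucol V j"
  using assms unfolding is_svd_def
  by (subst sv_trunc[symmetric], intro diag_action_T[of d1 U d2 V]) (auto intro: trunc_diag_carrier trunc_diag_diag)

lemma sv_nonneg: "is_svd d1 d2 M U S V \<Longrightarrow> sv S j \<ge> 0"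
  unfolding is_svd_def sv_def by auto

lemma sv_mono: assumes "is_svd d1 d2 M U S V" "i \<le> j" shows "sv S j \<le> sv S i"
proof -
  have Sc: "S \<in> carrier_mat d1 d2" using assms unfolding is_svd_def by auto
  show ?thesis
  proof (cases "j < min d1 d2")
    case True
    then show ?thesis using assms Sc unfolding is_svd_def sv_def by auto
  next
    case False
    then have "sv S j = 0" using Sc unfolding sv_def by auto
    then show ?thesis using sv_nonneg[OF assms(1)] by simp
  qed
qed

lemma ucol_orth:
  assumes U: "orth_mat n U"
  shows "ucol U i \<bullet> ucol U j = (if i = j \<and> i < n then 1 else 0)"
proof -
  have Uc: "U \<in> carrier_mat n n" using U by (simp add: orth_mat_def)
  show ?thesis
  proof (cases "i < n \<and> j < n")
    case True
    then have "ucol U i \<bullet> ucol U j = (transpose_mat U * U) $$ (i,j)"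
      using Uc by (simp add: ucol_def row_transpose)
    also have "\<dots> = (if i = j then 1 else 0)" using U True by (simp add: orth_mat_def)
    finally show ?thesis using True by simp
  next
    case False
    then show ?thesis using Uc by (auto simp: ucol_def)
  qed
qed

lemma vnorm_ucol_le: assumes "orth_mat n U" shows "vnorm (ucol U i) \<le> 1"
  unfolding vnorm_eq ucol_orth[OF assms] by auto

lemma kernel_exists:
  fixes W :: "real mat"
  assumes W: "W \<in> carrier_mat n nc" and lt: "n < nc"
  shows "\<exists>x \<in> carrier_vec nc. x \<noteq> 0\<^sub>v nc \<and> W *\<^sub>v x = 0\<^sub>v n"
proof (cases "distinct (cols W)")
  case True
  interpret vs: vec_space "TYPE(real)" n .
  have sub: "set (cols W) \<subseteq> carrier_vec n" using W cols_dim by blast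
  have card: "card (set (cols W)) = nc" using True W distinct_card by fastforce
  have "vs.lin_dep (set (cols W))"
  proof (rule ccontr)
    assume "\<not> vs.lin_dep (set (cols W))"
    then have "card (set (cols W)) \<le> vs.dim"
      using vs.li_le_dim(2)[OF vs.fin_dim sub] by simp
    then show False using card lt vs.dim_is_n by simp
  qed
  then obtain v where "v \<in> carrier_vec nc" "v \<noteq> 0\<^sub>v nc" "W *\<^sub>v v = 0\<^sub>v n"
    using vs.lin_depE[OF W _ True] by blast
  then show ?thesis by blast
next
  case False
  then obtain i j where ij: "i < length (cols W)" "j < length (cols W)" "i \<noteq> j" "cols W ! i = cols W ! j"
    using distinct_conv_nth by blast
  then have ij2: "i < nc" "j < nc" "col W i = col W j" using W by auto
  define x :: "real vec" where "x = unit_vec nc i - unit_vec nc j"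
  have xc: "x \<in> carrier_vec nc" unfolding x_def by simp
  have "x $ i = 1" unfolding x_def using ij2 ij(3) by simp
  then have "x \<noteq> 0\<^sub>v nc" using ij2 by auto
  moreover have "W *\<^sub>v x = 0\<^sub>v n"
  proof -
    have "W *\<^sub>v x = W *\<^sub>v unit_vec nc i - W *\<^sub>v unit_vec nc j"
      unfolding x_def using W by (intro mult_minus_distrib_mat_vec) auto
    also have "\<dots> = col W i - col W j" using mat_unit_vec[OF W] ij2 by simp
    also have "\<dots> = 0\<^sub>v n" using ij2 W by (intro eq_vecI) auto
    finally show ?thesis .
  qed
  ultimately show ?thesis using xc by blast
qed

lemma orth_exists:
  fixes w :: "nat \<Rightarrow> real vec"
  assumes w: "\<And>i. i < k \<Longrightarrow> w i \<in> carrier_vec n" and lt: "k < n"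
  shows "\<exists>x \<in> carrier_vec n. x \<noteq> 0\<^sub>v n \<and> (\<forall>i<k. w i \<bullet> x = 0)"
proof -
  define W where "W = mat k n (\<lambda>(i,j). w i $ j)"
  have Wc: "W \<in> carrier_mat k n" unfolding W_def by simp
  obtain x where x: "x \<in> carrier_vec n" "x \<noteq> 0\<^sub>v n" "W *\<^sub>v x = 0\<^sub>v k"
    using kernel_exists[OF Wc lt] by blast
  have "w i \<bullet> x = 0" if i: "i < k" for i
  proof -
    have "row W i = w i" using w[OF i] i unfolding W_def by (intro eq_vecI) auto
    then have "w i \<bullet> x = (W *\<^sub>v x) $ i" using i Wc by simp
    then show ?thesis using x(3) i by simp
  qed
  then show ?thesis using x by blast
qed

lemma vnorm_triangle:
  assumes a: "a \<in> carrier_vec n" and b: "b \<in> carrier_vec n"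
  shows "vnorm (a + b) \<le> vnorm a + vnorm b"
proof -
  have ab: "a + b \<in> carrier_vec n" using a b by (rule add_carrier_vec)
  have e1: "(a + b) \<bullet> (a + b) = a \<bullet> (a + b) + b \<bullet> (a + b)"
    by (rule add_scalar_prod_distrib[OF a b ab])
  have e2: "a \<bullet> (a + b) = a \<bullet> a + a \<bullet> b" by (rule scalar_prod_add_distrib[OF a a b])
  have e3: "b \<bullet> (a + b) = b \<bullet> a + b \<bullet> b" by (rule scalar_prod_add_distrib[OF b a b])
  have e4: "b \<bullet> a = a \<bullet> b" by (rule comm_scalar_prod[OF b a])
  have dim: "dim_vec a = dim_vec b" using carrier_vecD[OF a] carrier_vecD[OF b] by simp
  have c: "a \<bullet> b \<le> vnorm a * vnorm b" using cs_vec[OF dim] by linarith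
  have "(vnorm (a + b))^2 = (a + b) \<bullet> (a + b)" by (rule vnorm_sq)
  also have "\<dots> = (vnorm a)^2 + 2 * (a \<bullet> b) + (vnorm b)^2"
    unfolding e1 e2 e3 e4 vnorm_sq by linarith
  also have "\<dots> \<le> (vnorm a)^2 + 2 * (vnorm a * vnorm b) + (vnorm b)^2"
    using c by linarith
  also have "\<dots> = (vnorm a + vnorm b)^2" by (simp add: power2_eq_square algebra_simps)
  finally have "(vnorm (a + b))^2 \<le> (vnorm a + vnorm b)^2" .
  then show ?thesis by (rule power2_le_imp_le) (intro add_nonneg_nonneg vnorm_nonneg)
qed

lemma svd_norm_formula:
  assumes M: "is_svd d1 d2 M U S V" and x: "x \<in> carrier_vec d2" and D: "d1 \<le> D" "d2 \<le> D"
  shows "(M *\<^sub>v x) \<bullet> (M *\<^sub>v x) = (\<Sum>i<D. (sv S i)^2 * (ucol V i \<bullet> x)^2)"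
proof -
  have Mc: "M \<in> carrier_mat d1 d2" and U: "orth_mat d1 U" and V: "orth_mat d2 V"
    using M unfolding is_svd_def by auto
  have Uc: "U \<in> carrier_mat d1 d1" using U by (simp add: orth_mat_def)
  have Mx: "M *\<^sub>v x \<in> carrier_vec d1" using Mc x by simp
  have "(M *\<^sub>v x) \<bullet> (M *\<^sub>v x) = (\<Sum>i<D. (ucol U i \<bullet> (M *\<^sub>v x))^2)"
    using parseval_pad[OF U Mx D(1)] by simp
  also have "\<dots> = (\<Sum>i<D. (sv S i)^2 * (ucol V i \<bullet> x)^2)"
  proof (intro sum.cong refl)
    fix i
    have uc: "ucol U i \<in> carrier_vec d1" using Uc by (rule ucol_carrier)
    have "ucol U i \<bullet> (M *\<^sub>v x) = (transpose_mat M *\<^sub>v ucol U i) \<bullet> x"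
      using transpose_vec_mult_scalar[OF Mc x uc] by simp
    also have "\<dots> = (sv S i \<cdot>\<^sub>v ucol V i) \<bullet> x" using svd_left[OF M] by simp
    also have "\<dots> = sv S i * (ucol V i \<bullet> x)"
      using V x by (intro smult_scalar_prod_distrib ucol_carrier) (auto simp: orth_mat_def)
    finally show "(ucol U i \<bullet> (M *\<^sub>v x))^2 = (sv S i)^2 * (ucol V i \<bullet> x)^2"
      by (simp add: power_mult_distrib)
  qed
  finally show ?thesis .
qed

lemma weyl:
  assumes M: "is_svd d1 d2 M U S V" and N: "is_svd d1 d2 N U' S' V'"
    and k: "k < min d1 d2"
    and bnd: "\<And>x. x \<in> carrier_vec d2 \<Longrightarrow> vnorm ((M - N) *\<^sub>v x) \<le> c * vnorm x"
  shows "sv S k \<le> sv S' k + c"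
proof -
  have Mc: "M \<in> carrier_mat d1 d2" and V: "orth_mat d2 V" and Nc: "N \<in> carrier_mat d1 d2"
    and V': "orth_mat d2 V'"
    using M N unfolding is_svd_def by auto
  have Vc: "V \<in> carrier_mat d2 d2" and V'c: "V' \<in> carrier_mat d2 d2"
    using V V' by (auto simp: orth_mat_def)
  define w where "w i = (if i < k then ucol V' i else ucol V (i + 1))" for i
  have wc: "w i \<in> carrier_vec d2" for i unfolding w_def using Vc V'c ucol_carrier by auto
  obtain x where x: "x \<in> carrier_vec d2" "x \<noteq> 0\<^sub>v d2" "\<forall>i<d2 - 1. w i \<bullet> x = 0"
    using orth_exists[of "d2 - 1" w d2] wc k by auto
  have o1: "ucol V i \<bullet> x = 0" if "k < i" for i
  proof (cases "i < d2")
    case True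
    then have "w (i - 1) \<bullet> x = 0" using x(3) that by auto
    moreover have "\<not> (i - 1 < k)" "i - 1 + 1 = i" using that by auto
    ultimately show ?thesis unfolding w_def by simp
  next
    case False
    then show ?thesis using Vc x by (simp add: ucol_def)
  qed
  have o2: "ucol V' i \<bullet> x = 0" if "i < k" for i
  proof -
    have "i < d2 - 1" using that k by auto
    then have "w i \<bullet> x = 0" using x(3) by blast
    then show ?thesis using that unfolding w_def by simp
  qed
  define D where "D = max d1 d2"
  have D: "d1 \<le> D" "d2 \<le> D" unfolding D_def by auto
  have xx: "x \<bullet> x = (\<Sum>i<D. (ucol V i \<bullet> x)^2)" using parseval_pad[OF V x(1) D(2)] by simp
  have xx': "x \<bullet> x = (\<Sum>i<D. (ucol V' i \<bullet> x)^2)" using parseval_pad[OF V' x(1) D(2)] by simp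
  have low: "(sv S k)^2 * (x \<bullet> x) \<le> (M *\<^sub>v x) \<bullet> (M *\<^sub>v x)"
  proof -
    have "(sv S k)^2 * (x \<bullet> x) = (\<Sum>i<D. (sv S k)^2 * (ucol V i \<bullet> x)^2)"
      unfolding xx by (simp add: sum_distrib_left)
    also have "\<dots> \<le> (\<Sum>i<D. (sv S i)^2 * (ucol V i \<bullet> x)^2)"
    proof (intro sum_mono)
      fix i assume "i \<in> {..<D}"
      show "(sv S k)^2 * (ucol V i \<bullet> x)^2 \<le> (sv S i)^2 * (ucol V i \<bullet> x)^2"
      proof (cases "k < i")
        case True then show ?thesis using o1 by simp
      next
        case False
        then have "sv S k \<le> sv S i" using sv_mono[OF M] by simp
        then have "(sv S k)^2 \<le> (sv S i)^2" using sv_nonneg[OF M, of k] by (intro power_mono) auto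
        then show ?thesis by (intro mult_right_mono) auto
      qed
    qed
    also have "\<dots> = (M *\<^sub>v x) \<bullet> (M *\<^sub>v x)" using svd_norm_formula[OF M x(1) D] by simp
    finally show ?thesis .
  qed
  have up: "(N *\<^sub>v x) \<bullet> (N *\<^sub>v x) \<le> (sv S' k)^2 * (x \<bullet> x)"
  proof -
    have "(N *\<^sub>v x) \<bullet> (N *\<^sub>v x) = (\<Sum>i<D. (sv S' i)^2 * (ucol V' i \<bullet> x)^2)"
      using svd_norm_formula[OF N x(1) D] by simp
    also have "\<dots> \<le> (\<Sum>i<D. (sv S' k)^2 * (ucol V' i \<bullet> x)^2)"
    proof (intro sum_mono)
      fix i assume "i \<in> {..<D}"
      show "(sv S' i)^2 * (ucol V' i \<bullet> x)^2 \<le> (sv S' k)^2 * (ucol V' i \<bullet> x)^2"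
      proof (cases "i < k")
        case True then show ?thesis using o2 by simp
      next
        case False
        then have "sv S' i \<le> sv S' k" using sv_mono[OF N] by simp
        then have "(sv S' i)^2 \<le> (sv S' k)^2" using sv_nonneg[OF N, of i] by (intro power_mono) auto
        then show ?thesis by (intro mult_right_mono) auto
      qed
    qed
    also have "\<dots> = (sv S' k)^2 * (x \<bullet> x)"
      unfolding xx' by (simp add: sum_distrib_left)
    finally show ?thesis .
  qed
  have nx: "vnorm x > 0" using vnorm_zero_iff[OF x(1)] x(2) vnorm_nonneg[of x] by linarith
  have l2: "sv S k * vnorm x \<le> vnorm (M *\<^sub>v x)"
  proof -
    have "(sv S k * vnorm x)^2 \<le> (vnorm (M *\<^sub>v x))^2"
      using low by (simp add: power_mult_distrib vnorm_sq)
    then show ?thesis using vnorm_nonneg[of "M *\<^sub>v x"] by (rule power2_le_imp_le)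
  qed
  have u2: "vnorm (N *\<^sub>v x) \<le> sv S' k * vnorm x"
  proof -
    have "(vnorm (N *\<^sub>v x))^2 \<le> (sv S' k * vnorm x)^2"
      using up by (simp add: power_mult_distrib vnorm_sq)
    then show ?thesis by (rule power2_le_imp_le) (intro mult_nonneg_nonneg sv_nonneg[OF N] vnorm_nonneg)
  qed
  have "M *\<^sub>v x = N *\<^sub>v x + (M - N) *\<^sub>v x"
  proof -
    have "(M - N) *\<^sub>v x = M *\<^sub>v x - N *\<^sub>v x"
      using Mc Nc x by (intro minus_mult_distrib_mat_vec) auto
    then show ?thesis using Mc Nc x by auto
  qed
  moreover have cm: "M - N \<in> carrier_mat d1 d2" by (rule minus_carrier_mat[OF Nc])
  moreover have "N *\<^sub>v x \<in> carrier_vec d1" using Nc x(1) by simp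
  ultimately have "vnorm (M *\<^sub>v x) \<le> vnorm (N *\<^sub>v x) + vnorm ((M - N) *\<^sub>v x)"
    using vnorm_triangle[of "N *\<^sub>v x" d1 "(M - N) *\<^sub>v x"] mult_mat_vec_carrier[OF cm x(1)] by simp
  also have "\<dots> \<le> sv S' k * vnorm x + c * vnorm x" using u2 bnd[OF x(1)] by simp
  finally have "sv S k * vnorm x \<le> (sv S' k + c) * vnorm x" using l2 by (simp add: algebra_simps)
  then show ?thesis using nx by simp
qed

lemma frob_formula:
  assumes X: "X \<in> carrier_mat d1 d2" and U: "orth_mat d1 U" and V: "orth_mat d2 V"
    and D: "d1 \<le> D" "d2 \<le> D"
  shows "(frob_norm X)^2 = (\<Sum>i<D. \<Sum>j<D. (ucol U i \<bullet> (X *\<^sub>v ucol V j))^2)"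
proof -
  have Vc: "V \<in> carrier_mat d2 d2" using V by (simp add: orth_mat_def)
  have "(\<Sum>i<D. \<Sum>j<D. (ucol U i \<bullet> (X *\<^sub>v ucol V j))^2) = (\<Sum>j<D. \<Sum>i<D. (ucol U i \<bullet> (X *\<^sub>v ucol V j))^2)"
    by (rule sum.swap)
  also have "\<dots> = (\<Sum>j<D. (X *\<^sub>v ucol V j) \<bullet> (X *\<^sub>v ucol V j))"
  proof (intro sum.cong refl)
    fix j
    have "X *\<^sub>v ucol V j \<in> carrier_vec d1" by (rule mult_mat_vec_carrier[OF X ucol_carrier[OF Vc]])
    then show "(\<Sum>i<D. (ucol U i \<bullet> (X *\<^sub>v ucol V j))^2) = (X *\<^sub>v ucol V j) \<bullet> (X *\<^sub>v ucol V j)"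
      by (rule parseval_pad[OF U _ D(1)])
  qed
  also have "\<dots> = (\<Sum>j<D. \<Sum>k<d1. (ucol V j \<bullet> row X k)^2)"
  proof (intro sum.cong refl)
    fix j
    have vc: "ucol V j \<in> carrier_vec d2" using Vc by (rule ucol_carrier)
    have "(X *\<^sub>v ucol V j) \<bullet> (X *\<^sub>v ucol V j) = (\<Sum>k<d1. ((X *\<^sub>v ucol V j) $ k)^2)"
      using X by (simp add: sq_sum_eq)
    also have "\<dots> = (\<Sum>k<d1. (ucol V j \<bullet> row X k)^2)"
    proof (intro sum.cong refl)
      fix k assume "k \<in> {..<d1}"
      then have "(X *\<^sub>v ucol V j) $ k = row X k \<bullet> ucol V j" using X by simp
      also have "\<dots> = ucol V j \<bullet> row X k" using X vc by (intro comm_scalar_prod[of _ d2]) auto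
      finally show "((X *\<^sub>v ucol V j) $ k)^2 = (ucol V j \<bullet> row X k)^2" by simp
    qed
    finally show "(X *\<^sub>v ucol V j) \<bullet> (X *\<^sub>v ucol V j) = (\<Sum>k<d1. (ucol V j \<bullet> row X k)^2)" .
  qed
  also have "\<dots> = (\<Sum>k<d1. \<Sum>j<D. (ucol V j \<bullet> row X k)^2)" by (rule sum.swap)
  also have "\<dots> = (\<Sum>k<d1. row X k \<bullet> row X k)"
  proof (intro sum.cong refl)
    fix k
    have "row X k \<in> carrier_vec d2" using X by (intro carrier_vecI) auto
    then show "(\<Sum>j<D. (ucol V j \<bullet> row X k)^2) = row X k \<bullet> row X k"
      by (rule parseval_pad[OF V _ D(2)])
  qed
  also have "\<dots> = (\<Sum>k<d1. \<Sum>l<d2. (X $$ (k,l))^2)"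
  proof (intro sum.cong refl)
    fix k assume k: "k \<in> {..<d1}"
    have "row X k \<bullet> row X k = (\<Sum>l<dim_vec (row X k). (row X k $ l)^2)" by (rule sq_sum_eq)
    also have "\<dots> = (\<Sum>l<d2. (X $$ (k,l))^2)" using X k by (intro sum.cong) auto
    finally show "row X k \<bullet> row X k = (\<Sum>l<d2. (X $$ (k,l))^2)" .
  qed
  also have "\<dots> = (frob_norm X)^2"
  proof -
    have "(\<Sum>k<d1. \<Sum>l<d2. (X $$ (k,l))^2) \<ge> 0" by (intro sum_nonneg) auto
    then show ?thesis unfolding frob_norm_def using X by simp
  qed
  finally show ?thesis by simp
qed

lemma scal_a:
  fixes a b e f s \<tau> h :: real
  assumes e: "\<tau> * b - s * a = e" and f: "\<tau> * a - s * b = f"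
    and h: "h > 0" "\<tau> - s \<ge> h" and s: "s \<ge> 0"
  shows "a^2 \<le> (e^2 + f^2) / h^2"
proof -
  have p: "(\<tau> - s) * (a + b) = e + f" using e f by (simp add: algebra_simps)
  have m: "(\<tau> + s) * (a - b) = f - e" using e f by (simp add: algebra_simps)
  have h1: "\<tau> + s \<ge> h" using h s by linarith
  have "h * \<bar>a + b\<bar> \<le> \<bar>e + f\<bar>"
  proof -
    have "h * \<bar>a + b\<bar> \<le> (\<tau> - s) * \<bar>a + b\<bar>" using h by (intro mult_right_mono) auto
    also have "\<dots> = \<bar>e + f\<bar>" using p h by (metis abs_mult abs_of_pos less_le_trans)
    finally show ?thesis .
  qed
  then have q1: "(h * (a + b))^2 \<le> (e + f)^2"
    by (metis abs_le_square_iff abs_mult abs_of_pos h(1))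
  have "h * \<bar>a - b\<bar> \<le> \<bar>f - e\<bar>"
  proof -
    have "h * \<bar>a - b\<bar> \<le> (\<tau> + s) * \<bar>a - b\<bar>" using h1 by (intro mult_right_mono) auto
    also have "\<dots> = \<bar>f - e\<bar>" using m h1 h by (metis abs_mult abs_of_pos less_le_trans)
    finally show ?thesis .
  qed
  then have q2: "(h * (a - b))^2 \<le> (f - e)^2"
    by (metis abs_le_square_iff abs_mult abs_of_pos h(1))
  have "h^2 * a^2 \<le> ((h * (a + b))^2 + (h * (a - b))^2) / 2"
  proof -
    have "((h * (a + b))^2 + (h * (a - b))^2) / 2 - h^2 * a^2 = h^2 * b^2"
      by (simp add: power2_eq_square algebra_simps)
    moreover have "0 \<le> h^2 * b^2" by simp
    ultimately show ?thesis by linarith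
  qed
  also have "\<dots> \<le> ((e + f)^2 + (f - e)^2) / 2" using q1 q2 by simp
  also have "\<dots> = e^2 + f^2" by (simp add: power2_eq_square algebra_simps)
  finally have "h^2 * a^2 \<le> e^2 + f^2" .
  then show ?thesis using h by (simp add: field_simps)
qed

lemma scal_b:
  fixes a b e f s \<tau> L :: real
  assumes e: "\<tau> * b - s * a = e" and f: "\<tau> * a - s * b = f"
    and g: "s - \<tau> > 0" and t: "\<tau> \<ge> 0" and L: "L \<ge> 1" "s \<le> L * (s - \<tau>)"
  shows "(s * a)^2 \<le> L^2 * (e^2 + f^2)"
proof -
  have p: "(s - \<tau>) * (a + b) = - (e + f)" using e f by (simp add: algebra_simps)
  have m: "(s + \<tau>) * (a - b) = f - e" using e f by (simp add: algebra_simps)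
  have sp: "s > 0" using g t by linarith
  have q1: "\<bar>s * (a + b)\<bar> \<le> L * \<bar>e + f\<bar>"
  proof -
    have "(s - \<tau>) * \<bar>s * (a + b)\<bar> = s * \<bar>e + f\<bar>"
      using p g sp by (metis abs_minus_cancel abs_mult abs_of_pos mult.left_commute)
    also have "\<dots> \<le> L * (s - \<tau>) * \<bar>e + f\<bar>" using L by (intro mult_right_mono) auto
    finally have "(s - \<tau>) * \<bar>s * (a + b)\<bar> \<le> (s - \<tau>) * (L * \<bar>e + f\<bar>)" by (simp add: algebra_simps)
    then show ?thesis using g by simp
  qed
  have q2: "\<bar>s * (a - b)\<bar> \<le> L * \<bar>f - e\<bar>"
  proof -
    have "(s + \<tau>) * \<bar>s * (a - b)\<bar> = s * \<bar>f - e\<bar>"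
      using m sp t by (metis abs_mult abs_of_nonneg add_nonneg_nonneg less_imp_le mult.left_commute)
    also have "\<dots> \<le> (s + \<tau>) * \<bar>f - e\<bar>" using t by (intro mult_right_mono) auto
    finally have "\<bar>s * (a - b)\<bar> \<le> \<bar>f - e\<bar>" using sp t by simp
    also have "\<dots> \<le> L * \<bar>f - e\<bar>" using L by (simp add: mult_le_cancel_right1)
    finally show ?thesis .
  qed
  have r1: "(s * (a + b))^2 \<le> L^2 * (e + f)^2"
  proof -
    have "(s * (a + b))^2 = \<bar>s * (a + b)\<bar>^2" by simp
    also have "\<dots> \<le> (L * \<bar>e + f\<bar>)^2" using q1 by (intro power_mono) auto
    also have "\<dots> = L^2 * (e + f)^2" by (simp add: power_mult_distrib)
    finally show ?thesis .
  qed
  have r2: "(s * (a - b))^2 \<le> L^2 * (f - e)^2"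
  proof -
    have "(s * (a - b))^2 = \<bar>s * (a - b)\<bar>^2" by simp
    also have "\<dots> \<le> (L * \<bar>f - e\<bar>)^2" using q2 by (intro power_mono) auto
    also have "\<dots> = L^2 * (f - e)^2" by (simp add: power_mult_distrib)
    finally show ?thesis .
  qed
  have "(s * a)^2 \<le> ((s * (a + b))^2 + (s * (a - b))^2) / 2"
  proof -
    have "((s * (a + b))^2 + (s * (a - b))^2) / 2 - (s * a)^2 = s^2 * b^2"
      by (simp add: power2_eq_square algebra_simps)
    moreover have "0 \<le> s^2 * b^2" by simp
    ultimately show ?thesis by linarith
  qed
  also have "\<dots> \<le> (L^2 * (e + f)^2 + L^2 * (f - e)^2) / 2" using r1 r2 by simp
  also have "\<dots> = L^2 * (e^2 + f^2)" by (simp add: power2_eq_square algebra_simps)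
  finally show ?thesis .
qed

lemma sq_le_from_norm:
  assumes "vnorm z \<le> c * vnorm w" "vnorm w \<le> 1" "c \<ge> 0"
  shows "z \<bullet> z \<le> c^2"
proof -
  have "vnorm z \<le> c" using assms mult_left_le by (metis order_trans)
  then have "(vnorm z)^2 \<le> c^2" using vnorm_nonneg[of z] by (intro power_mono) auto
  then show ?thesis by (simp add: vnorm_sq)
qed

lemma indicator_sum:
  assumes "r \<le> D"
  shows "(\<Sum>i<D. (if i < r then X else 0)) = real r * (X::real)"
proof -
  have "(\<Sum>i<D. (if i < r then X else 0)) = (\<Sum>i<r. (if i < r then X else 0)) + (\<Sum>i\<in>{r..<D}. (if i < r then X else 0))"
    using assms by (metis lessThan_atLeast0 sum.atLeastLessThan_concat zero_le)
  also have "(\<Sum>i\<in>{r..<D}. (if i < r then X else 0)) = 0" by (intro sum.neutral) auto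
  also have "(\<Sum>i<r. (if i < r then X else 0)) = (\<Sum>i<r. X)" by (intro sum.cong) auto
  finally show ?thesis by simp
qed

lemma vnorm_uminus: "vnorm (- v) = vnorm v"
  unfolding vnorm_def by simp

lemma sq_sum_le: "(x + y)^2 \<le> 2 * x^2 + 2 * (y::real)^2"
proof -
  have "2 * x^2 + 2 * y^2 - (x + y)^2 = (x - y)^2" by (simp add: power2_eq_square algebra_simps)
  moreover have "(x - y)^2 \<ge> 0" by simp
  ultimately show ?thesis by linarith
qed

lemma core:
  fixes A E B Ar Br U S V U2 S2 V2 :: "real mat"
  assumes A: "is_svd d1 d2 A U S V" and B: "is_svd d1 d2 B U2 S2 V2"
    and Ec: "E \<in> carrier_mat d1 d2" and BAE: "B = A + E"
    and Ar: "Ar = U * trunc_diag r S * transpose_mat V"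
    and Br: "Br = U2 * trunc_diag r S2 * transpose_mat V2"
    and r: "1 \<le> r" and gap: "sv S (r - 1) > sv S r"
    and eps: "spec_norm E \<le> (sv S (r - 1) - sv S r) / 2"
  shows "frob_norm (Br - Ar) \<le> 5 * sqrt (real r) * spec_norm E * (1 + sv S r / (sv S (r - 1) - sv S r))"
proof -
  define \<epsilon> where "\<epsilon> = spec_norm E"
  define \<delta> where "\<delta> = sv S (r - 1) - sv S r"
  define K where "K = sv S r / \<delta>"
  define D where "D = max d1 d2"
  define s where "s j = sv S j" for j
  define t where "t j = sv S2 j" for j
  have \<delta>p: "\<delta> > 0" unfolding \<delta>_def using gap by simp
  have \<epsilon>0: "\<epsilon> \<ge> 0" unfolding \<epsilon>_def by (rule spec_nonneg)
  have \<epsilon>\<delta>: "\<epsilon> \<le> \<delta> / 2" unfolding \<epsilon>_def \<delta>_def using eps by simp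
  have Kd: "K * \<delta> = s r" unfolding K_def s_def using \<delta>p by simp
  have s0: "s j \<ge> 0" for j unfolding s_def by (rule sv_nonneg[OF A])
  have t0: "t j \<ge> 0" for j unfolding t_def by (rule sv_nonneg[OF B])
  have K0: "K \<ge> 0" unfolding K_def using \<delta>p s0[of r] s_def by simp
  have smono: "i \<le> j \<Longrightarrow> s j \<le> s i" for i j unfolding s_def by (rule sv_mono[OF A])
  have tmono: "i \<le> j \<Longrightarrow> t j \<le> t i" for i j unfolding t_def by (rule sv_mono[OF B])
  have Ac: "A \<in> carrier_mat d1 d2" and U: "orth_mat d1 U" and V: "orth_mat d2 V"
    and Sc: "S \<in> carrier_mat d1 d2"
    using A unfolding is_svd_def by auto
  have Bc: "B \<in> carrier_mat d1 d2" and U2: "orth_mat d1 U2" and V2: "orth_mat d2 V2"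
    and S2c: "S2 \<in> carrier_mat d1 d2"
    using B unfolding is_svd_def by auto
  have Uc: "U \<in> carrier_mat d1 d1" "U2 \<in> carrier_mat d1 d1" using U U2 by (auto simp: orth_mat_def)
  have Vc: "V \<in> carrier_mat d2 d2" "V2 \<in> carrier_mat d2 d2" using V V2 by (auto simp: orth_mat_def)
  have Arc: "Ar \<in> carrier_mat d1 d2" unfolding Ar using Uc Vc Sc by (auto intro: trunc_diag_carrier)
  have Brc: "Br \<in> carrier_mat d1 d2" unfolding Br using Uc Vc S2c by (auto intro: trunc_diag_carrier)
  have rm: "r - 1 < min d1 d2"
  proof (rule ccontr)
    assume "\<not> r - 1 < min d1 d2"
    then have "sv S (r - 1) = 0" "sv S r = 0" using Sc by (auto simp: sv_def)
    then show False using gap by simp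
  qed
  have rD: "r \<le> D" using rm r unfolding D_def by auto
  have D: "d1 \<le> D" "d2 \<le> D" unfolding D_def by auto
  have Bx: "B *\<^sub>v x = A *\<^sub>v x + E *\<^sub>v x" if "x \<in> carrier_vec d2" for x
    unfolding BAE using Ac Ec that by (rule add_mult_distrib_mat_vec)
  have Ex: "vnorm (E *\<^sub>v x) \<le> \<epsilon> * vnorm x" if "x \<in> carrier_vec d2" for x
    unfolding \<epsilon>_def using spec_bound[of x E] that Ec by simp
  have ETx: "vnorm (transpose_mat E *\<^sub>v x) \<le> \<epsilon> * vnorm x" if "x \<in> carrier_vec d1" for x
    unfolding \<epsilon>_def using spec_bound_T[of x E] that Ec by simp
  have w1: "s (r - 1) \<le> t (r - 1) + \<epsilon>"
  proof -
    have "vnorm ((A - B) *\<^sub>v x) \<le> \<epsilon> * vnorm x" if x: "x \<in> carrier_vec d2" for x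
    proof -
      have "(A - B) *\<^sub>v x = A *\<^sub>v x - B *\<^sub>v x" using Ac Bc x by (rule minus_mult_distrib_mat_vec)
      also have "\<dots> = - (E *\<^sub>v x)" unfolding Bx[OF x] using Ac Ec x by (intro eq_vecI) auto
      finally show ?thesis using Ex[OF x] by (simp add: vnorm_uminus)
    qed
    then show ?thesis unfolding s_def t_def using weyl[OF A B rm] by blast
  qed
  have w2: "t r \<le> s r + \<epsilon>"
  proof (cases "r < min d1 d2")
    case True
    have "vnorm ((B - A) *\<^sub>v x) \<le> \<epsilon> * vnorm x" if x: "x \<in> carrier_vec d2" for x
    proof -
      have "(B - A) *\<^sub>v x = B *\<^sub>v x - A *\<^sub>v x" using Bc Ac x by (rule minus_mult_distrib_mat_vec)
      also have "\<dots> = E *\<^sub>v x" unfolding Bx[OF x] using Ac Ec x by (intro eq_vecI) auto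
      finally show ?thesis using Ex[OF x] by simp
    qed
    then show ?thesis unfolding s_def t_def using weyl[OF B A True] by blast
  next
    case False
    then have "t r = 0" unfolding t_def using S2c by (auto simp: sv_def)
    then show ?thesis using s0[of r] \<epsilon>0 by simp
  qed
  define u where "u i = ucol U i" for i
  define v where "v i = ucol V i" for i
  define u2 where "u2 i = ucol U2 i" for i
  define v2 where "v2 i = ucol V2 i" for i
  have uc: "u i \<in> carrier_vec d1" "u2 i \<in> carrier_vec d1" for i
    unfolding u_def u2_def using Uc by (auto intro: ucol_carrier)
  have vc: "v i \<in> carrier_vec d2" "v2 i \<in> carrier_vec d2" for i
    unfolding v_def v2_def using Vc by (auto intro: ucol_carrier)
  have un: "vnorm (u i) \<le> 1" "vnorm (u2 i) \<le> 1" "vnorm (v i) \<le> 1" "vnorm (v2 i) \<le> 1" for i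
    unfolding u_def u2_def v_def v2_def using U U2 V V2 by (auto intro: vnorm_ucol_le)
  have Av: "A *\<^sub>v v j = s j \<cdot>\<^sub>v u j" for j unfolding u_def v_def s_def by (rule svd_right[OF A])
  have ATu: "transpose_mat A *\<^sub>v u j = s j \<cdot>\<^sub>v v j" for j unfolding u_def v_def s_def by (rule svd_left[OF A])
  have Bv: "B *\<^sub>v v2 j = t j \<cdot>\<^sub>v u2 j" for j unfolding u2_def v2_def t_def by (rule svd_right[OF B])
  have BTu: "transpose_mat B *\<^sub>v u2 j = t j \<cdot>\<^sub>v v2 j" for j unfolding u2_def v2_def t_def by (rule svd_left[OF B])
  have Arv: "Ar *\<^sub>v v j = (if j < r then s j else 0) \<cdot>\<^sub>v u j" for j
    unfolding u_def v_def s_def by (rule trunc_right[OF A Ar])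
  have BrTu: "transpose_mat Br *\<^sub>v u2 j = (if j < r then t j else 0) \<cdot>\<^sub>v v2 j" for j
    unfolding u2_def v2_def t_def by (rule trunc_left[OF B Br])
  define a where "a i j = u2 i \<bullet> u j" for i j
  define b where "b i j = v2 i \<bullet> v j" for i j
  define e where "e i j = u2 i \<bullet> (E *\<^sub>v v j)" for i j
  define f where "f i j = u j \<bullet> (E *\<^sub>v v2 i)" for i j
  have erel: "t i * b i j - s j * a i j = e i j" for i j
  proof -
    have "u2 i \<bullet> (B *\<^sub>v v j) = u2 i \<bullet> (A *\<^sub>v v j) + e i j"
      unfolding e_def Bx[OF vc(1)] using Ac Ec uc vc by (intro scalar_prod_add_distrib) auto
    moreover have "u2 i \<bullet> (B *\<^sub>v v j) = t i * b i j"
    proof -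
      have "u2 i \<bullet> (B *\<^sub>v v j) = (transpose_mat B *\<^sub>v u2 i) \<bullet> v j"
        using transpose_vec_mult_scalar[OF Bc vc(1) uc(2)] by simp
      also have "\<dots> = t i * b i j" unfolding BTu b_def using vc by (intro smult_scalar_prod_distrib) auto
      finally show ?thesis .
    qed
    moreover have "u2 i \<bullet> (A *\<^sub>v v j) = s j * a i j"
      unfolding Av a_def using uc by (intro scalar_prod_smult_distrib) auto
    ultimately show ?thesis by simp
  qed
  have frel: "t i * a i j - s j * b i j = f i j" for i j
  proof -
    have "u j \<bullet> (B *\<^sub>v v2 i) = u j \<bullet> (A *\<^sub>v v2 i) + f i j"
      unfolding f_def Bx[OF vc(2)] using Ac Ec uc vc by (intro scalar_prod_add_distrib) auto
    moreover have "u j \<bullet> (B *\<^sub>v v2 i) = t i * a i j"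
    proof -
      have "u j \<bullet> (B *\<^sub>v v2 i) = t i * (u j \<bullet> u2 i)"
        unfolding Bv using uc by (intro scalar_prod_smult_distrib) auto
      also have "u j \<bullet> u2 i = a i j" unfolding a_def using uc by (intro comm_scalar_prod) auto
      finally show ?thesis .
    qed
    moreover have "u j \<bullet> (A *\<^sub>v v2 i) = s j * b i j"
    proof -
      have "u j \<bullet> (A *\<^sub>v v2 i) = (transpose_mat A *\<^sub>v u j) \<bullet> v2 i"
        using transpose_vec_mult_scalar[OF Ac vc(2) uc(1)] by simp
      also have "\<dots> = s j * (v j \<bullet> v2 i)" unfolding ATu using vc by (intro smult_scalar_prod_distrib) auto
      also have "v j \<bullet> v2 i = b i j" unfolding b_def using vc by (intro comm_scalar_prod) auto
      finally show ?thesis .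
    qed
    ultimately show ?thesis by simp
  qed
  have row_e: "(\<Sum>j<D. (e i j)^2) \<le> \<epsilon>^2" for i
  proof -
    define z where "z = transpose_mat E *\<^sub>v u2 i"
    have zc: "z \<in> carrier_vec d2" unfolding z_def using Ec uc(2) by (intro mult_mat_vec_carrier[of _ d2 d1]) auto
    have "e i j = ucol V j \<bullet> z" for j
    proof -
      have "e i j = z \<bullet> v j" unfolding e_def z_def using transpose_vec_mult_scalar[OF Ec vc(1) uc(2)] by simp
      also have "\<dots> = v j \<bullet> z" using zc vc by (intro comm_scalar_prod) auto
      finally show ?thesis unfolding v_def .
    qed
    then have "(\<Sum>j<D. (e i j)^2) = z \<bullet> z" using parseval_pad[OF V zc D(2)] by simp
    also have "\<dots> \<le> \<epsilon>^2" unfolding z_def by (rule sq_le_from_norm[OF ETx[OF uc(2)] un(2) \<epsilon>0])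
    finally show ?thesis .
  qed
  have col_e: "(\<Sum>i<D. (e i j)^2) \<le> \<epsilon>^2" for j
  proof -
    define z where "z = E *\<^sub>v v j"
    have zc: "z \<in> carrier_vec d1" unfolding z_def using Ec vc(1) by (intro mult_mat_vec_carrier[of _ d1 d2]) auto
    have "(\<Sum>i<D. (e i j)^2) = z \<bullet> z" unfolding e_def u2_def z_def[symmetric]
      using parseval_pad[OF U2 zc D(1)] by simp
    also have "\<dots> \<le> \<epsilon>^2" unfolding z_def by (rule sq_le_from_norm[OF Ex[OF vc(1)] un(3) \<epsilon>0])
    finally show ?thesis .
  qed
  have row_f: "(\<Sum>j<D. (f i j)^2) \<le> \<epsilon>^2" for i
  proof -
    define z where "z = E *\<^sub>v v2 i"
    have zc: "z \<in> carrier_vec d1" unfolding z_def using Ec vc(2) by (intro mult_mat_vec_carrier[of _ d1 d2]) auto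
    have "(\<Sum>j<D. (f i j)^2) = z \<bullet> z" unfolding f_def u_def z_def[symmetric]
      using parseval_pad[OF U zc D(1)] by simp
    also have "\<dots> \<le> \<epsilon>^2" unfolding z_def by (rule sq_le_from_norm[OF Ex[OF vc(2)] un(4) \<epsilon>0])
    finally show ?thesis .
  qed
  have col_f: "(\<Sum>i<D. (f i j)^2) \<le> \<epsilon>^2" for j
  proof -
    define z where "z = transpose_mat E *\<^sub>v u j"
    have zc: "z \<in> carrier_vec d2" unfolding z_def using Ec uc(1) by (intro mult_mat_vec_carrier[of _ d2 d1]) auto
    have "f i j = ucol V2 i \<bullet> z" for i
    proof -
      have "f i j = z \<bullet> v2 i" unfolding f_def z_def using transpose_vec_mult_scalar[OF Ec vc(2) uc(1)] by simp
      also have "\<dots> = v2 i \<bullet> z" using zc vc by (intro comm_scalar_prod) auto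
      finally show ?thesis unfolding v2_def .
    qed
    then have "(\<Sum>i<D. (f i j)^2) = z \<bullet> z" using parseval_pad[OF V2 zc D(2)] by simp
    also have "\<dots> \<le> \<epsilon>^2" unfolding z_def by (rule sq_le_from_norm[OF ETx[OF uc(1)] un(1) \<epsilon>0])
    finally show ?thesis .
  qed
  define ee where "ee i j = (e i j)^2 + (f i j)^2" for i j
  have ee0: "ee i j \<ge> 0" for i j unfolding ee_def by simp
  have row_ee: "(\<Sum>j<D. ee i j) \<le> 2 * \<epsilon>^2" for i
    unfolding ee_def sum.distrib using row_e[of i] row_f[of i] by simp
  have col_ee: "(\<Sum>i<D. ee i j) \<le> 2 * \<epsilon>^2" for j
    unfolding ee_def sum.distrib using col_e[of j] col_f[of j] by simp
  define M where "M i j = (if i < r then t i else 0) * b i j - (if j < r then s j else 0) * a i j" for i j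
  have Mf: "u2 i \<bullet> ((Br - Ar) *\<^sub>v v j) = M i j" for i j
  proof -
    have dm: "(Br - Ar) *\<^sub>v v j = Br *\<^sub>v v j - Ar *\<^sub>v v j" by (rule minus_mult_distrib_mat_vec[OF Brc Arc vc(1)])
    have "u2 i \<bullet> ((Br - Ar) *\<^sub>v v j) = u2 i \<bullet> (Br *\<^sub>v v j) - u2 i \<bullet> (Ar *\<^sub>v v j)"
      unfolding dm by (rule scalar_prod_minus_distrib[OF uc(2) mult_mat_vec_carrier[OF Brc vc(1)] mult_mat_vec_carrier[OF Arc vc(1)]])
    moreover have "u2 i \<bullet> (Br *\<^sub>v v j) = (if i < r then t i else 0) * b i j"
    proof -
      have "u2 i \<bullet> (Br *\<^sub>v v j) = (transpose_mat Br *\<^sub>v u2 i) \<bullet> v j"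
        using transpose_vec_mult_scalar[OF Brc vc(1) uc(2)] by simp
      also have "\<dots> = (if i < r then t i else 0) * b i j" unfolding BrTu b_def using vc
        by (intro smult_scalar_prod_distrib) auto
      finally show ?thesis .
    qed
    moreover have "u2 i \<bullet> (Ar *\<^sub>v v j) = (if j < r then s j else 0) * a i j"
      unfolding Arv a_def using uc by (intro scalar_prod_smult_distrib) auto
    ultimately show ?thesis unfolding M_def by simp
  qed
  have frob2: "(frob_norm (Br - Ar))^2 = (\<Sum>i<D. \<Sum>j<D. (M i j)^2)"
  proof -
    have "Br - Ar \<in> carrier_mat d1 d2" by (rule minus_carrier_mat[OF Arc])
    from frob_formula[OF this U2 V D] show ?thesis unfolding Mf[symmetric] u2_def v_def .
  qed
  define c1 where "c1 = 2 + 8 * K^2"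
  define L where "L = 2 + 2 * K"
  define c2 where "c2 = L^2"
  have c1p: "c1 \<ge> 1" unfolding c1_def by simp
  have L1: "L \<ge> 1" unfolding L_def using K0 by simp
  have c2p: "c2 \<ge> 0" unfolding c2_def by simp
  have pw: "(M i j)^2 \<le> (if i < r then c1 else 0) * ee i j + (if j < r then c2 else 0) * ee i j" for i j
  proof -
    have e2: "(e i j)^2 \<le> ee i j" unfolding ee_def by simp
    show ?thesis
    proof (cases "i < r")
      case ir: True
      show ?thesis
      proof (cases "j < r")
        case True
        then have "M i j = e i j" unfolding M_def using ir erel[of i j] by simp
        moreover have "ee i j \<le> c1 * ee i j" using mult_right_mono[OF c1p ee0[of i j]] by simp
        ultimately have "(M i j)^2 \<le> c1 * ee i j" using e2 by simp
        moreover have "0 \<le> c2 * ee i j" using c2p ee0[of i j] by simp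
        ultimately show ?thesis using ir True by simp
      next
        case False
        have ti: "t (r - 1) \<le> t i" using ir by (intro tmono) simp
        have sj: "s j \<le> s r" using False by (intro smono) simp
        have hh: "t i - s j \<ge> \<delta> / 2" using ti sj w1 \<epsilon>\<delta> unfolding \<delta>_def s_def by simp
        have asq: "(a i j)^2 \<le> ((e i j)^2 + (f i j)^2) / (\<delta> / 2)^2"
          by (rule scal_a[OF erel frel _ hh s0]) (use \<delta>p in simp)
        have "M i j = e i j + s j * a i j" unfolding M_def using ir False erel[of i j] by simp
        then have "(M i j)^2 \<le> 2 * (e i j)^2 + 2 * ((s j)^2 * (a i j)^2)"
          using sq_sum_le[of "e i j" "s j * a i j"] by (simp add: power_mult_distrib)
        also have "(s j)^2 * (a i j)^2 \<le> (s r)^2 * (ee i j / (\<delta> / 2)^2)"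
        proof (intro mult_mono)
          show "(s j)^2 \<le> (s r)^2" using sj s0[of j] by (intro power_mono) auto
          show "(a i j)^2 \<le> ee i j / (\<delta> / 2)^2" using asq unfolding ee_def .
        qed (auto simp: ee0)
        also have "(s r)^2 * (ee i j / (\<delta> / 2)^2) = 4 * K^2 * ee i j"
          unfolding Kd[symmetric] using \<delta>p by (simp add: field_simps power2_eq_square)
        finally have "(M i j)^2 \<le> 2 * ee i j + 8 * K^2 * ee i j" using e2 by simp
        then have "(M i j)^2 \<le> c1 * ee i j" unfolding c1_def by (simp add: algebra_simps)
        then show ?thesis using ir False by simp
      qed
    next
      case ir: False
      show ?thesis
      proof (cases "j < r")
        case True
        have sj: "s (r - 1) \<le> s j" using True by (intro smono) simp
        have ti: "t i \<le> t r" using ir by (intro tmono) simp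
        have hh: "s j - t i \<ge> \<delta> / 2" using ti sj w2 \<epsilon>\<delta> unfolding \<delta>_def s_def by simp
        have gp: "s j - t i > 0" using hh \<delta>p by simp
        have "(L - 1) * (s j - t i) \<ge> (L - 1) * (\<delta> / 2)" using hh L1 by (intro mult_left_mono) auto
        moreover have "(L - 1) * (\<delta> / 2) = \<delta> / 2 + K * \<delta>" unfolding L_def by (simp add: algebra_simps)
        moreover have "L * (s j - t i) = (L - 1) * (s j - t i) + (s j - t i)" by (simp add: algebra_simps)
        ultimately have Lc: "s j \<le> L * (s j - t i)" using ti w2 \<epsilon>\<delta> Kd by linarith
        have "(s j * a i j)^2 \<le> L^2 * ((e i j)^2 + (f i j)^2)"
          by (rule scal_b[OF erel frel gp t0 L1 Lc])
        moreover have "M i j = - (s j * a i j)" unfolding M_def using ir True by simp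
        ultimately have "(M i j)^2 \<le> c2 * ee i j" unfolding c2_def ee_def by simp
        then show ?thesis using ir True by simp
      next
        case False
        then show ?thesis unfolding M_def using ir by simp
      qed
    qed
  qed
  have S1: "(\<Sum>i<D. \<Sum>j<D. (if i < r then c1 else 0) * ee i j) \<le> real r * (c1 * (2 * \<epsilon>^2))"
  proof -
    have "(\<Sum>i<D. \<Sum>j<D. (if i < r then c1 else 0) * ee i j) = (\<Sum>i<D. (if i < r then c1 else 0) * (\<Sum>j<D. ee i j))"
      by (simp add: sum_distrib_left)
    also have "\<dots> \<le> (\<Sum>i<D. (if i < r then c1 * (2 * \<epsilon>^2) else 0))"
      using row_ee c1p by (intro sum_mono) (auto intro: mult_left_mono)
    also have "\<dots> = real r * (c1 * (2 * \<epsilon>^2))" by (rule indicator_sum[OF rD])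
    finally show ?thesis .
  qed
  have S2: "(\<Sum>i<D. \<Sum>j<D. (if j < r then c2 else 0) * ee i j) \<le> real r * (c2 * (2 * \<epsilon>^2))"
  proof -
    have "(\<Sum>i<D. \<Sum>j<D. (if j < r then c2 else 0) * ee i j) = (\<Sum>j<D. \<Sum>i<D. (if j < r then c2 else 0) * ee i j)"
      by (rule sum.swap)
    also have "\<dots> = (\<Sum>j<D. (if j < r then c2 else 0) * (\<Sum>i<D. ee i j))"
      by (simp add: sum_distrib_left)
    also have "\<dots> \<le> (\<Sum>j<D. (if j < r then c2 * (2 * \<epsilon>^2) else 0))"
      using col_ee c2p by (intro sum_mono) (auto intro: mult_left_mono)
    also have "\<dots> = real r * (c2 * (2 * \<epsilon>^2))" by (rule indicator_sum[OF rD])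
    finally show ?thesis .
  qed
  have "(frob_norm (Br - Ar))^2 \<le> (\<Sum>i<D. \<Sum>j<D. (if i < r then c1 else 0) * ee i j + (if j < r then c2 else 0) * ee i j)"
    unfolding frob2 using pw by (intro sum_mono) auto
  also have "\<dots> = (\<Sum>i<D. \<Sum>j<D. (if i < r then c1 else 0) * ee i j) + (\<Sum>i<D. \<Sum>j<D. (if j < r then c2 else 0) * ee i j)"
    by (simp add: sum.distrib)
  also have "\<dots> \<le> real r * (c1 * (2 * \<epsilon>^2)) + real r * (c2 * (2 * \<epsilon>^2))" using S1 S2 by simp
  also have "\<dots> = (real r * \<epsilon>^2) * (2 * (c1 + c2))" by (simp add: algebra_simps)
  also have "\<dots> \<le> (real r * \<epsilon>^2) * (25 * (1 + K)^2)"
  proof (intro mult_left_mono)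
    show "2 * (c1 + c2) \<le> 25 * (1 + K)^2" unfolding c1_def c2_def L_def using K0
      by (simp add: power2_eq_square algebra_simps)
  qed simp
  also have "\<dots> = (5 * sqrt (real r) * \<epsilon> * (1 + K))^2"
    by (simp add: power_mult_distrib mult_ac)
  finally have "(frob_norm (Br - Ar))^2 \<le> (5 * sqrt (real r) * \<epsilon> * (1 + K))^2" .
  then have "frob_norm (Br - Ar) \<le> 5 * sqrt (real r) * \<epsilon> * (1 + K)"
    by (rule power2_le_imp_le) (use \<epsilon>0 K0 in simp)
  then show ?thesis unfolding \<epsilon>_def K_def \<delta>_def s_def .
qed

lemma sv_unique:
  assumes A: "is_svd d1 d2 A U S V" and A0: "is_svd d1 d2 A U0 S0 V0"
  shows "sv S0 k = sv S k"
proof (cases "k < min d1 d2")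
  case True
  have Ac: "A \<in> carrier_mat d1 d2" using A unfolding is_svd_def by auto
  have bnd: "vnorm ((A - A) *\<^sub>v x) \<le> 0 * vnorm x" if x: "x \<in> carrier_vec d2" for x
  proof -
    have "(A - A) *\<^sub>v x = A *\<^sub>v x - A *\<^sub>v x" using Ac Ac x by (rule minus_mult_distrib_mat_vec)
    also have "\<dots> = 0\<^sub>v d1" using Ac x by (intro eq_vecI) auto
    finally show ?thesis by (simp add: vnorm_def)
  qed
  have "sv S k \<le> sv S0 k + 0" by (rule weyl[OF A A0 True bnd])
  moreover have "sv S0 k \<le> sv S k + 0" by (rule weyl[OF A0 A True bnd])
  ultimately show ?thesis by simp
next
  case False
  have "S \<in> carrier_mat d1 d2" "S0 \<in> carrier_mat d1 d2" using A A0 unfolding is_svd_def by auto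
  then show ?thesis using False by (auto simp: sv_def)
qed

lemma sing_val_sv:
  assumes A: "is_svd d1 d2 A U S V" and i: "1 \<le> i"
  shows "sing_val A i = sv S (i - 1)"
proof -
  have Ac: "A \<in> carrier_mat d1 d2" using A unfolding is_svd_def by auto
  define S0 where "S0 = (SOME S. \<exists>U V. is_svd (dim_row A) (dim_col A) A U S V)"
  have ex: "\<exists>S U V. is_svd (dim_row A) (dim_col A) A U S V" using A Ac by auto
  then have "\<exists>U V. is_svd (dim_row A) (dim_col A) A U S0 V" unfolding S0_def by (rule someI_ex)
  then obtain U0 V0 where A0: "is_svd d1 d2 A U0 S0 V0" using Ac by auto
  have S0c: "S0 \<in> carrier_mat d1 d2" using A0 unfolding is_svd_def by auto
  have "sing_val A i = (if 1 \<le> i \<and> i \<le> min d1 d2 then S0 $$ (i - 1, i - 1) else 0)"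
    unfolding sing_val_def S0_def[symmetric] Let_def using Ac by simp
  also have "\<dots> = sv S0 (i - 1)" using i S0c unfolding sv_def by auto
  also have "\<dots> = sv S (i - 1)" by (rule sv_unique[OF A A0])
  finally show ?thesis .
qed

theorem lemma1:
  shows "\<exists>C0 :: real. C0 > 0 \<and>
    (\<forall>(d1::nat) (d2::nat) (A::real mat) (E::real mat) (r::nat) Ar Br.
       A \<in> carrier_mat d1 d2 \<longrightarrow> E \<in> carrier_mat d1 d2 \<longrightarrow>
       1 \<le> r \<longrightarrow> r < max d1 d2 \<longrightarrow>
       sing_val A r > sing_val A (r + 1) \<longrightarrow>
       spec_norm E \<le> (sing_val A r - sing_val A (r + 1)) / 2 \<longrightarrow>
       is_rank_trunc A r Ar \<longrightarrow> is_rank_trunc (A + E) r Br \<longrightarrow>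
       frob_norm (Br - Ar) \<le> C0 * sqrt (real r) * spec_norm E *
         (1 + sqrt (sing_val A (r + 1) * sing_val A 1) / (sing_val A r - sing_val A (r + 1))))"
proof (intro exI[of _ 5] conjI allI impI)
  fix d1 d2 :: nat and A E :: "real mat" and r :: nat and Ar Br
  assume Ac: "A \<in> carrier_mat d1 d2" and Ec: "E \<in> carrier_mat d1 d2" and r: "1 \<le> r"
    and rmax: "r < max d1 d2"
    and gap: "sing_val A r > sing_val A (r + 1)"
    and eps: "spec_norm E \<le> (sing_val A r - sing_val A (r + 1)) / 2"
    and tA: "is_rank_trunc A r Ar" and tB: "is_rank_trunc (A + E) r Br"
  obtain U S V where A: "is_svd d1 d2 A U S V" and Ar: "Ar = U * trunc_diag r S * transpose_mat V"
    using tA Ac unfolding is_rank_trunc_def by auto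
  have ABc: "A + E \<in> carrier_mat d1 d2" using Ac Ec by simp
  obtain U2 S2 V2 where B: "is_svd d1 d2 (A + E) U2 S2 V2" and Br: "Br = U2 * trunc_diag r S2 * transpose_mat V2"
    using tB ABc Ec unfolding is_rank_trunc_def by auto
  have sr: "sing_val A r = sv S (r - 1)" using sing_val_sv[OF A r] .
  have sr1: "sing_val A (r + 1) = sv S r" using sing_val_sv[OF A, of "r + 1"] by simp
  have s1: "sing_val A 1 = sv S 0" using sing_val_sv[OF A, of 1] by simp
  have gap': "sv S (r - 1) > sv S r" using gap sr sr1 by simp
  have eps': "spec_norm E \<le> (sv S (r - 1) - sv S r) / 2" using eps sr sr1 by simp
  have main: "frob_norm (Br - Ar) \<le> 5 * sqrt (real r) * spec_norm E * (1 + sv S r / (sv S (r - 1) - sv S r))"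
    by (rule core[OF A B Ec refl Ar Br r gap' eps'])
  have d: "sv S (r - 1) - sv S r > 0" using gap' by simp
  have "sv S r \<le> sqrt (sv S r * sv S 0)"
  proof -
    have "sv S r \<le> sv S 0" by (rule sv_mono[OF A]) simp
    then have "sv S r * sv S r \<le> sv S r * sv S 0" using sv_nonneg[OF A, of r] by (intro mult_left_mono) auto
    then have "sqrt (sv S r * sv S r) \<le> sqrt (sv S r * sv S 0)" by (rule real_sqrt_le_mono)
    moreover have "sqrt (sv S r * sv S r) = sv S r" using sv_nonneg[OF A, of r] by simp
    ultimately show ?thesis by simp
  qed
  then have "sv S r / (sv S (r - 1) - sv S r) \<le> sqrt (sv S r * sv S 0) / (sv S (r - 1) - sv S r)"
    using d by (intro divide_right_mono) auto
  then have "5 * sqrt (real r) * spec_norm E * (1 + sv S r / (sv S (r - 1) - sv S r))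
      \<le> 5 * sqrt (real r) * spec_norm E * (1 + sqrt (sv S r * sv S 0) / (sv S (r - 1) - sv S r))"
    using spec_nonneg[of E] by (intro mult_left_mono) auto
  with main show "frob_norm (Br - Ar) \<le> 5 * sqrt (real r) * spec_norm E *
         (1 + sqrt (sing_val A (r + 1) * sing_val A 1) / (sing_val A r - sing_val A (r + 1)))"
    unfolding sr sr1 s1 by linarith
qed simp

end
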